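(* For every 2-coloring of the edges of $K_\mathbb{N}$ there exist a set $A\subseteq\mathbb{N}$, a vertex $v\in A$ and a color $c$ such that, letting $F$ be the graph on $A$ consisting of all edges of color $c$ inside $A$, every vertex of $F$ has infinite degree in $F$ and $\overline{d}(N_F(v))\ge 1/2$.
   Context: $K_{\mathbb{N}}$ is the complete graph on $\mathbb{N}=\{1,2,\dots\}$. $\overline{d}(V)=\limsup_{t\to\infty}|V\cap\{1,\dots,t\}|/t$. $N_F(v)$ is the set of neighbors of $v$ in $F$. *)

theory Defs
  imports "HOL-Library.Liminf_Limsup" "HOL-Library.Extended_Real"
begin

definition upper_density :: "nat set \<Rightarrow> ereal" where
  "upper_density V = limsup (\<lambda>t. ereal (real (card (V \<inter> {1..t})) / real t))"

text \<open>Neighbourhood of v in the graph F on vertex set A whose edges are the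
  edges of K_N inside A having colour col under the edge colouring c.\<close>
definition colour_nbhd :: "(nat set \<Rightarrow> bool) \<Rightarrow> bool \<Rightarrow> nat set \<Rightarrow> nat \<Rightarrow> nat set" where
  "colour_nbhd c col A v = {u \<in> A. u \<noteq> v \<and> c {u, v} = col}"

end

theory Submission
  imports Defs "HOL-Analysis.Analysis" "HOL-Library.Ramsey"
begin

abbreviation ratio :: "nat set \<Rightarrow> nat \<Rightarrow> ereal" where
  "ratio V t \<equiv> ereal (real (card (V \<inter> {1..t})) / real t)"

lemma ud_nonneg: "0 \<le> upper_density S"
  unfolding upper_density_def
  by (rule le_Limsup) auto

lemma ud_mono: assumes "S \<subseteq> T" shows "upper_density S \<le> upper_density T"
  unfolding upper_density_def
proof (rule Limsup_mono, rule always_eventually, rule allI)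
  fix t
  have "card (S \<inter> {1..t}) \<le> card (T \<inter> {1..t})"
    using assms by (intro card_mono) auto
  then show "ratio S t \<le> ratio T t"
    by (simp add: divide_right_mono)
qed

lemma ud_subadd: "upper_density (S \<union> T) \<le> upper_density S + upper_density T"
proof -
  have "upper_density (S \<union> T) \<le> limsup (\<lambda>t. ratio S t + ratio T t)"
    unfolding upper_density_def
  proof (rule Limsup_mono, rule always_eventually, rule allI)
    fix t
    have "card ((S \<union> T) \<inter> {1..t}) \<le> card (S \<inter> {1..t}) + card (T \<inter> {1..t})"
      by (metis Int_Un_distrib2 card_Un_le)
    then have "real (card ((S \<union> T) \<inter> {1..t})) / real t \<le>
       real (card (S \<inter> {1..t})) / real t + real (card (T \<inter> {1..t})) / real t"
      by (simp add: divide_right_mono add_divide_distrib[symmetric])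
    then show "ratio (S \<union> T) t \<le> ratio S t + ratio T t" by simp
  qed
  also have "\<dots> \<le> upper_density S + upper_density T"
    unfolding upper_density_def by (rule ereal_limsup_add_mono)
  finally show ?thesis .
qed

lemma ud_finite: assumes "finite F" shows "upper_density F = 0"
proof (rule antisym[OF _ ud_nonneg])
  have "upper_density F \<le> limsup (\<lambda>t. ereal (real (card F) / real t))"
    unfolding upper_density_def
  proof (rule Limsup_mono, rule always_eventually, rule allI)
    fix t
    have "card (F \<inter> {1..t}) \<le> card F" using assms by (intro card_mono) auto
    then show "ratio F t \<le> ereal (real (card F) / real t)"
      by (simp add: divide_right_mono)
  qed
  also have "\<dots> = 0"
  proof (rule lim_imp_Limsup)
    show "((\<lambda>t. ereal (real (card F) / real t)) \<longlongrightarrow> 0) sequentially"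
      using lim_const_over_n[of "real (card F)"] by (simp add: zero_ereal_def tendsto_ereal)
  qed simp
  finally show "upper_density F \<le> 0" .
qed

lemma ud_pos: "upper_density {1..} \<ge> 1"
  unfolding upper_density_def
proof (rule le_Limsup)
  show "\<forall>\<^sub>F t in sequentially. 1 \<le> ratio {1..} t"
    using eventually_ge_at_top[of "1::nat"]
    by eventually_elim (simp add: Int_absorb1)
qed simp

lemma ud_minus_finite: assumes "finite F" shows "upper_density S \<le> upper_density (S - F)"
proof -
  have "upper_density S \<le> upper_density ((S - F) \<union> F)" by (rule ud_mono) auto
  also have "\<dots> \<le> upper_density (S - F) + upper_density F" by (rule ud_subadd)
  finally show ?thesis using ud_finite[OF assms] by simp
qed

lemma half_ereal: "(1/2::ereal) = ereal (1/2)" by (simp add: one_ereal_def)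

lemma ud_infinite: assumes "upper_density S \<ge> 1/2" shows "infinite S"
proof
  assume "finite S"
  then have "upper_density S = 0" by (rule ud_finite)
  with assms show False unfolding half_ereal by simp
qed

lemma ereal_half: fixes a b :: ereal
  assumes "0 \<le> a" "0 \<le> b" "1 \<le> a + b" shows "1/2 \<le> a \<or> 1/2 \<le> b"
proof -
  have h: "(1/2::ereal) = ereal (1/2)" by (simp add: one_ereal_def)
  show ?thesis using assms unfolding h by (cases a; cases b) auto
qed

definition good :: "(nat set \<Rightarrow> bool) \<Rightarrow> bool \<Rightarrow> nat set \<Rightarrow> bool" where
  "good c col S \<longleftrightarrow> S \<subseteq> {1..} \<and> (\<forall>x\<in>S. infinite (colour_nbhd c col S x))"

definition core :: "(nat set \<Rightarrow> bool) \<Rightarrow> bool \<Rightarrow> nat set" where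
  "core c col = \<Union>{S. good c col S}"

lemma nbhd_mono: "S \<subseteq> T \<Longrightarrow> colour_nbhd c col S x \<subseteq> colour_nbhd c col T x"
  unfolding colour_nbhd_def by auto

lemma core_good: "good c col (core c col)"
proof -
  have "core c col \<subseteq> {1..}" unfolding core_def good_def by auto
  moreover have "infinite (colour_nbhd c col (core c col) x)" if xc: "x \<in> core c col" for x
  proof -
    obtain S where S: "good c col S" "x \<in> S" using xc unfolding core_def by blast
    then have "infinite (colour_nbhd c col S x)" "S \<subseteq> core c col"
      unfolding good_def core_def by auto
    then show ?thesis using infinite_super[OF nbhd_mono] by blast
  qed
  ultimately show ?thesis unfolding good_def by auto
qed

lemma good_core: "good c col S \<Longrightarrow> S \<subseteq> core c col"
  unfolding core_def by auto

lemma L1: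
  assumes "good c col S" "x0 \<in> {1..}" "finite (colour_nbhd c (\<not>col) {1..} x0)"
    "upper_density S \<ge> 1/2"
  shows "\<exists>A v col. A \<subseteq> {1..} \<and> v \<in> A \<and>
           (\<forall>x\<in>A. infinite (colour_nbhd c col A x)) \<and>
           upper_density (colour_nbhd c col A v) \<ge> 1/2"
proof -
  let ?A = "insert x0 S"
  let ?F = "insert x0 (colour_nbhd c (\<not>col) {1..} x0)"
  have S1: "S \<subseteq> {1..}" using assms(1) good_def by auto
  have sub: "S - ?F \<subseteq> colour_nbhd c col ?A x0"
    using S1 unfolding colour_nbhd_def by auto
  have fin: "finite ?F" using assms(3) by simp
  have inf: "infinite S" using ud_infinite assms(4) by blast
  have "infinite (S - ?F)" using inf fin by simp
  then have i0: "infinite (colour_nbhd c col ?A x0)" using infinite_super[OF sub] by blast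
  have "1/2 \<le> upper_density S" by fact
  also have "\<dots> \<le> upper_density (S - ?F)" by (rule ud_minus_finite[OF fin])
  also have "\<dots> \<le> upper_density (colour_nbhd c col ?A x0)" by (rule ud_mono[OF sub])
  finally have d: "1/2 \<le> upper_density (colour_nbhd c col ?A x0)" .
  have "\<forall>x\<in>?A. infinite (colour_nbhd c col ?A x)"
  proof
    fix x assume "x \<in> ?A"
    then show "infinite (colour_nbhd c col ?A x)"
    proof
      assume "x = x0" then show ?thesis using i0 by simp
    next
      assume "x \<in> S"
      then have "infinite (colour_nbhd c col S x)" using assms(1) good_def by auto
      moreover have "colour_nbhd c col S x \<subseteq> colour_nbhd c col ?A x" by (rule nbhd_mono) auto
      ultimately show ?thesis using infinite_super by blast
    qed
  qed
  moreover have "insert x0 S \<subseteq> {1..}" using S1 assms(2) by auto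
  ultimately show ?thesis using d
    by (intro exI[of _ "insert x0 S"] exI[of _ x0] exI[of _ col] conjI) simp_all
qed

lemma cover: "upper_density (core c True) + upper_density (core c False) \<ge> 1"
proof -
  let ?V = "{1::nat..}"
  define Z where "Z = ?V - (core c True \<union> core c False)"
  have "finite Z"
  proof (rule ccontr)
    assume "infinite Z"
    moreover have "\<forall>x\<in>Z. \<forall>y\<in>Z. x \<noteq> y \<longrightarrow> (if c {x, y} then 1 else 0) < (2::nat)"
      by simp
    ultimately have "\<exists>Y t. Y \<subseteq> Z \<and> infinite Y \<and> t < (2::nat) \<and>
      (\<forall>x\<in>Y. \<forall>y\<in>Y. x\<noteq>y \<longrightarrow> (if c {x,y} then 1 else (0::nat)) = t)"
      by (rule Ramsey2)
    then obtain Y t where Y: "Y \<subseteq> Z" "infinite Y" "t < (2::nat)"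
      "\<forall>x\<in>Y. \<forall>y\<in>Y. x\<noteq>y \<longrightarrow> (if c {x,y} then 1 else (0::nat)) = t"
      by blast
    define col where "col = (t = 1)"
    have "c {y,x} = col" if "x \<in> Y" "y \<in> Y" "x \<noteq> y" for x y
    proof -
      have e: "(if c {x,y} then 1 else (0::nat)) = t" using Y(4) that by blast
      have "c {y,x} = c {x,y}" by (simp add: insert_commute)
      then show ?thesis using e unfolding col_def by (cases "c {x,y}") auto
    qed
    then have "\<forall>x\<in>Y. \<forall>y\<in>Y. x\<noteq>y \<longrightarrow> c {y,x} = col" by blast
    then have "\<forall>x\<in>Y. colour_nbhd c col Y x = Y - {x}"
      unfolding colour_nbhd_def by auto
    then have "good c col Y" using Y(1,2) unfolding good_def Z_def by auto
    then have "Y \<subseteq> core c col" by (rule good_core)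
    moreover obtain y where "y \<in> Y" using Y(2) by (metis finite.emptyI ex_in_conv)
    ultimately show False using Y(1) unfolding Z_def by (cases col) auto
  qed
  have "1 \<le> upper_density ?V" by (rule ud_pos)
  also have "\<dots> \<le> upper_density ((core c True \<union> core c False) \<union> Z)" by (rule ud_mono) (auto simp: Z_def)
  also have "\<dots> \<le> upper_density (core c True \<union> core c False) + upper_density Z"
    by (rule ud_subadd)
  also have "\<dots> = upper_density (core c True \<union> core c False)"
    using ud_finite[OF \<open>finite Z\<close>] by simp
  also have "\<dots> \<le> upper_density (core c True) + upper_density (core c False)"
    by (rule ud_subadd)
  finally show ?thesis .
qed

theorem mainTheorem14:
  fixes c :: "nat set \<Rightarrow> bool"
  shows "\<exists>A v col. A \<subseteq> {1..} \<and> v \<in> A \<and>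
           (\<forall>x\<in>A. infinite (colour_nbhd c col A x)) \<and>
           upper_density (colour_nbhd c col A v) \<ge> 1/2"
proof (cases "\<forall>col. good c col {1..}")
  case True
  let ?V = "{1::nat..}"
  have "1 \<le> upper_density ?V" by (rule ud_pos)
  also have "\<dots> \<le> upper_density (?V - {1})" by (rule ud_minus_finite) simp
  also have "\<dots> \<le> upper_density (colour_nbhd c True ?V 1 \<union> colour_nbhd c False ?V 1)"
    by (rule ud_mono) (auto simp: colour_nbhd_def)
  also have "\<dots> \<le> upper_density (colour_nbhd c True ?V 1) + upper_density (colour_nbhd c False ?V 1)"
    by (rule ud_subadd)
  finally have "1/2 \<le> upper_density (colour_nbhd c True ?V 1) \<or> 1/2 \<le> upper_density (colour_nbhd c False ?V 1)"
    by (intro ereal_half ud_nonneg)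
  then obtain col where "1/2 \<le> upper_density (colour_nbhd c col ?V 1)" by blast
  moreover have "\<forall>x\<in>?V. infinite (colour_nbhd c col ?V x)" using True good_def by blast
  ultimately show ?thesis by (intro exI[of _ ?V] exI[of _ 1] exI[of _ col]) auto
next
  case False
  then obtain col0 where "\<not> good c col0 {1..}" by blast
  then obtain x0 where x0: "x0 \<in> {1..}" "finite (colour_nbhd c col0 {1..} x0)"
    unfolding good_def by auto
  define col where "col = (\<not> col0)"
  have x0': "finite (colour_nbhd c (\<not>col) {1..} x0)" using x0 col_def by simp
  show ?thesis
  proof (cases "upper_density (core c col) \<ge> 1/2")
    case True
    show ?thesis by (rule L1[OF core_good x0(1) x0' True])
  next
    case less: False
    have sum: "1 \<le> upper_density (core c col) + upper_density (core c (\<not>col))"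
      using cover[of c] by (cases col) (auto simp: add.commute)
    have big: "1/2 \<le> upper_density (core c (\<not>col))"
      using ereal_half[OF ud_nonneg ud_nonneg sum] less by blast
    have "\<not> good c col {1..}"
    proof
      assume "good c col {1..}"
      then have "{1..} \<subseteq> core c col" by (rule good_core)
      then have "1 \<le> upper_density (core c col)" using ud_pos[THEN order_trans, OF ud_mono] by blast
      moreover have "(1/2::ereal) \<le> 1" by (subst half_ereal) simp
      ultimately show False using less order_trans[of "1/2" 1 "upper_density (core c col)"] by simp
    qed
    then obtain x1 where x1: "x1 \<in> {1..}" "finite (colour_nbhd c col {1..} x1)"
      unfolding good_def by auto
    have x1': "finite (colour_nbhd c (\<not>\<not>col) {1..} x1)" using x1 by simp
    show ?thesis by (rule L1[OF core_good x1(1) x1' big])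
  qed
qed

end
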